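(* Consider the 9-puzzle: the $3\times 3$ grid graph with 9 distinct robots, one occupying each vertex. Then any two states of the 9-puzzle are connected via legal moves, i.e., from any assignment of the 9 robots to the 9 vertices one can reach any other such assignment by a finite sequence of legal moves.
   Context: A state is a bijection between the set of robots and the vertex set of the grid. A legal move (one time step) takes a state to another state such that each robot either stays at its vertex or moves to an adjacent vertex, no two robots end at the same vertex, and no two robots traverse the same edge in opposite directions (swap). Several robots may move simultaneously; since every vertex is occupied, the moving robots move synchronously along one or more vertex-disjoint cycles of the grid. *)

theory Defs
  imports Main
begin

definition grid3 :: "(nat \<times> nat) set" where
  "grid3 = {0..<3} \<times> {0..<3}"

definition grid_adj :: "nat \<times> nat \<Rightarrow> nat \<times> nat \<Rightarrow> bool" where
  "grid_adj u v \<longleftrightarrow>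
     (fst u = fst v \<and> (snd u = Suc (snd v) \<or> snd v = Suc (snd u))) \<or>
     (snd u = snd v \<and> (fst u = Suc (fst v) \<or> fst v = Suc (fst u)))"

definition is_state :: "('r \<Rightarrow> nat \<times> nat) \<Rightarrow> bool" where
  "is_state s \<longleftrightarrow> bij_betw s UNIV grid3"

definition legal_move :: "('r \<Rightarrow> nat \<times> nat) \<Rightarrow> ('r \<Rightarrow> nat \<times> nat) \<Rightarrow> bool" where
  "legal_move s t \<longleftrightarrow> is_state s \<and> is_state t \<and>
     (\<forall>r. t r = s r \<or> grid_adj (s r) (t r)) \<and>
     (\<forall>r1 r2. r1 \<noteq> r2 \<longrightarrow> \<not> (t r1 = s r2 \<and> t r2 = s r1))"

end

theory Submission
  imports Defs "HOL-Combinatorics.Permutations"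
begin

definition cyc4 :: "nat \<times> nat \<Rightarrow> nat \<times> nat \<Rightarrow> nat \<times> nat \<Rightarrow> nat \<times> nat \<Rightarrow> nat \<times> nat \<Rightarrow> nat \<times> nat" where
  "cyc4 a b c d = (\<lambda>v. if v = a then b else if v = b then c else if v = c then d else if v = d then a else v)"

definition G :: "'r::finite itself \<Rightarrow> (nat \<times> nat \<Rightarrow> nat \<times> nat) \<Rightarrow> bool" where
  "G (T::'r itself) p \<longleftrightarrow> p permutes grid3 \<and>
     (\<forall>s :: 'r::finite \<Rightarrow> nat \<times> nat. is_state s \<longrightarrow> legal_move\<^sup>*\<^sup>* s (p \<circ> s))"

lemma state_comp:
  assumes "p permutes grid3" "is_state s"
  shows "is_state (p \<circ> s)"
  using assms unfolding is_state_def
  by (meson bij_betw_trans permutes_imp_bij)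

lemma G_comp:
  assumes "G TYPE('r::finite) p" "G TYPE('r::finite) q"
  shows "G TYPE('r::finite) (p \<circ> q)"
  unfolding G_def
proof (intro conjI allI impI)
  show "p \<circ> q permutes grid3" using assms unfolding G_def by (simp add: permutes_compose)
  fix s :: "'r::finite \<Rightarrow> nat \<times> nat"
  assume s: "is_state s"
  have q: "q permutes grid3" and "legal_move\<^sup>*\<^sup>* s (q \<circ> s)" using assms s unfolding G_def by auto
  moreover have "legal_move\<^sup>*\<^sup>* (q \<circ> s) (p \<circ> (q \<circ> s))"
    using assms(1) state_comp[OF q s] unfolding G_def by blast
  ultimately show "legal_move\<^sup>*\<^sup>* s (p \<circ> q \<circ> s)"
    by (simp add: comp_assoc)
qed

lemma G_id: "G TYPE('r::finite) id"
  unfolding G_def by (simp add: permutes_id)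

lemma G_cyc4:
  assumes d: "a \<noteq> b" "a \<noteq> c" "a \<noteq> d" "b \<noteq> c" "b \<noteq> d" "c \<noteq> d"
    and m: "a \<in> grid3" "b \<in> grid3" "c \<in> grid3" "d \<in> grid3"
    and adj: "grid_adj a b" "grid_adj b c" "grid_adj c d" "grid_adj d a"
  shows "G TYPE('r::finite) (cyc4 a b c d)"
proof -
  have eq: "cyc4 a b c d = Transposition.transpose a b \<circ> Transposition.transpose b c \<circ> Transposition.transpose c d"
    using d by (auto simp: fun_eq_iff cyc4_def transpose_def)
  have p: "cyc4 a b c d permutes grid3"
    unfolding eq using m by (intro permutes_compose permutes_swap_id)
  have adjsym: "grid_adj u v \<Longrightarrow> grid_adj v u" for u v unfolding grid_adj_def by auto
  show ?thesis unfolding G_def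
  proof (intro conjI allI impI p)
    fix s :: "'r::finite \<Rightarrow> nat \<times> nat"
    assume s: "is_state s"
    have inj: "inj s" using s unfolding is_state_def bij_betw_def by auto
    have "legal_move s (cyc4 a b c d \<circ> s)"
      unfolding legal_move_def
    proof (intro conjI allI impI)
      show "is_state (cyc4 a b c d \<circ> s)" by (rule state_comp[OF p s])
      fix r
      show "(cyc4 a b c d \<circ> s) r = s r \<or> grid_adj (s r) ((cyc4 a b c d \<circ> s) r)"
        using adj by (auto simp: cyc4_def)
    next
      fix r1 r2 :: 'r
      assume "r1 \<noteq> r2"
      then have ne: "s r1 \<noteq> s r2" using inj by (auto dest: injD)
      show "\<not> ((cyc4 a b c d \<circ> s) r1 = s r2 \<and> (cyc4 a b c d \<circ> s) r2 = s r1)"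
        using ne d by (auto simp: cyc4_def split: if_splits)
    qed (rule s)
    then show "legal_move\<^sup>*\<^sup>* s (cyc4 a b c d \<circ> s)" by blast
  qed
qed

definition "cw00 = cyc4 (0,0) (0,1) (1,1) (1,0)"
definition "ccw00 = cyc4 (0,0) (1,0) (1,1) (0,1)"
definition "cw01 = cyc4 (0,1) (0,2) (1,2) (1,1)"
definition "ccw01 = cyc4 (0,1) (1,1) (1,2) (0,2)"
definition "cw10 = cyc4 (1,0) (1,1) (2,1) (2,0)"
definition "ccw10 = cyc4 (1,0) (2,0) (2,1) (1,1)"
definition "cw11 = cyc4 (1,1) (1,2) (2,2) (2,1)"
definition "ccw11 = cyc4 (1,1) (2,1) (2,2) (1,2)"

lemma G_cw00: "G TYPE('r::finite) cw00"
  unfolding cw00_def by (rule G_cyc4) (simp_all add: grid3_def grid_adj_def)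

lemma G_ccw00: "G TYPE('r::finite) ccw00"
  unfolding ccw00_def by (rule G_cyc4) (simp_all add: grid3_def grid_adj_def)

lemma G_cw01: "G TYPE('r::finite) cw01"
  unfolding cw01_def by (rule G_cyc4) (simp_all add: grid3_def grid_adj_def)

lemma G_ccw01: "G TYPE('r::finite) ccw01"
  unfolding ccw01_def by (rule G_cyc4) (simp_all add: grid3_def grid_adj_def)

lemma G_cw10: "G TYPE('r::finite) cw10"
  unfolding cw10_def by (rule G_cyc4) (simp_all add: grid3_def grid_adj_def)

lemma G_ccw10: "G TYPE('r::finite) ccw10"
  unfolding ccw10_def by (rule G_cyc4) (simp_all add: grid3_def grid_adj_def)

lemma G_cw11: "G TYPE('r::finite) cw11"
  unfolding cw11_def by (rule G_cyc4) (simp_all add: grid3_def grid_adj_def)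

lemma G_ccw11: "G TYPE('r::finite) ccw11"
  unfolding ccw11_def by (rule G_cyc4) (simp_all add: grid3_def grid_adj_def)


lemma T00: "G TYPE('r::finite) (Transposition.transpose (1,1) (0,0))"
proof -
  have e: "Transposition.transpose (1,1) (0,0) = cw10 \<circ> ccw01 \<circ> ccw00 \<circ> ccw10 \<circ> cw01"
  proof
    fix x :: "nat \<times> nat"
    show "Transposition.transpose (1,1) (0,0) x = (cw10 \<circ> ccw01 \<circ> ccw00 \<circ> ccw10 \<circ> cw01) x"
    proof (cases "x \<in> grid3")
      case True
      then obtain i j where v: "x = (i,j)" "i < 3" "j < 3" unfolding grid3_def by auto
      then have "i = 0 \<or> i = 1 \<or> i = 2" "j = 0 \<or> j = 1 \<or> j = 2" by auto
      then show ?thesis using v(1)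
        by (elim disjE) (simp_all add: cw00_def cw01_def cw10_def cw11_def ccw00_def ccw01_def ccw10_def ccw11_def cyc4_def transpose_def)
    next
      case False
      then have "x \<noteq> (0,0)" "x \<noteq> (0,1)" "x \<noteq> (0,2)" "x \<noteq> (1,0)" "x \<noteq> (1,1)" "x \<noteq> (1,2)" "x \<noteq> (2,0)" "x \<noteq> (2,1)" "x \<noteq> (2,2)"
        by (auto simp: grid3_def)
      then show ?thesis by (simp add: cw00_def cw01_def cw10_def cw11_def ccw00_def ccw01_def ccw10_def ccw11_def cyc4_def transpose_def)
    qed
  qed
  show ?thesis unfolding e by (intro G_comp G_cw00 G_cw01 G_cw10 G_cw11 G_ccw00 G_ccw01 G_ccw10 G_ccw11)
qed

lemma T01: "G TYPE('r::finite) (Transposition.transpose (1,1) (0,1))"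
proof -
  have e: "Transposition.transpose (1,1) (0,1) = cw00 \<circ> ccw10 \<circ> cw01 \<circ> cw10 \<circ> ccw01 \<circ> cw00 \<circ> cw00"
  proof
    fix x :: "nat \<times> nat"
    show "Transposition.transpose (1,1) (0,1) x = (cw00 \<circ> ccw10 \<circ> cw01 \<circ> cw10 \<circ> ccw01 \<circ> cw00 \<circ> cw00) x"
    proof (cases "x \<in> grid3")
      case True
      then obtain i j where v: "x = (i,j)" "i < 3" "j < 3" unfolding grid3_def by auto
      then have "i = 0 \<or> i = 1 \<or> i = 2" "j = 0 \<or> j = 1 \<or> j = 2" by auto
      then show ?thesis using v(1)
        by (elim disjE) (simp_all add: cw00_def cw01_def cw10_def cw11_def ccw00_def ccw01_def ccw10_def ccw11_def cyc4_def transpose_def)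
    next
      case False
      then have "x \<noteq> (0,0)" "x \<noteq> (0,1)" "x \<noteq> (0,2)" "x \<noteq> (1,0)" "x \<noteq> (1,1)" "x \<noteq> (1,2)" "x \<noteq> (2,0)" "x \<noteq> (2,1)" "x \<noteq> (2,2)"
        by (auto simp: grid3_def)
      then show ?thesis by (simp add: cw00_def cw01_def cw10_def cw11_def ccw00_def ccw01_def ccw10_def ccw11_def cyc4_def transpose_def)
    qed
  qed
  show ?thesis unfolding e by (intro G_comp G_cw00 G_cw01 G_cw10 G_cw11 G_ccw00 G_ccw01 G_ccw10 G_ccw11)
qed

lemma T02: "G TYPE('r::finite) (Transposition.transpose (1,1) (0,2))"
proof -
  have e: "Transposition.transpose (1,1) (0,2) = ccw11 \<circ> cw00 \<circ> cw01 \<circ> cw11 \<circ> ccw00"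
  proof
    fix x :: "nat \<times> nat"
    show "Transposition.transpose (1,1) (0,2) x = (ccw11 \<circ> cw00 \<circ> cw01 \<circ> cw11 \<circ> ccw00) x"
    proof (cases "x \<in> grid3")
      case True
      then obtain i j where v: "x = (i,j)" "i < 3" "j < 3" unfolding grid3_def by auto
      then have "i = 0 \<or> i = 1 \<or> i = 2" "j = 0 \<or> j = 1 \<or> j = 2" by auto
      then show ?thesis using v(1)
        by (elim disjE) (simp_all add: cw00_def cw01_def cw10_def cw11_def ccw00_def ccw01_def ccw10_def ccw11_def cyc4_def transpose_def)
    next
      case False
      then have "x \<noteq> (0,0)" "x \<noteq> (0,1)" "x \<noteq> (0,2)" "x \<noteq> (1,0)" "x \<noteq> (1,1)" "x \<noteq> (1,2)" "x \<noteq> (2,0)" "x \<noteq> (2,1)" "x \<noteq> (2,2)"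
        by (auto simp: grid3_def)
      then show ?thesis by (simp add: cw00_def cw01_def cw10_def cw11_def ccw00_def ccw01_def ccw10_def ccw11_def cyc4_def transpose_def)
    qed
  qed
  show ?thesis unfolding e by (intro G_comp G_cw00 G_cw01 G_cw10 G_cw11 G_ccw00 G_ccw01 G_ccw10 G_ccw11)
qed

lemma T10: "G TYPE('r::finite) (Transposition.transpose (1,1) (1,0))"
proof -
  have e: "Transposition.transpose (1,1) (1,0) = ccw00 \<circ> cw01 \<circ> ccw10 \<circ> ccw01 \<circ> cw10 \<circ> cw00 \<circ> cw00"
  proof
    fix x :: "nat \<times> nat"
    show "Transposition.transpose (1,1) (1,0) x = (ccw00 \<circ> cw01 \<circ> ccw10 \<circ> ccw01 \<circ> cw10 \<circ> cw00 \<circ> cw00) x"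
    proof (cases "x \<in> grid3")
      case True
      then obtain i j where v: "x = (i,j)" "i < 3" "j < 3" unfolding grid3_def by auto
      then have "i = 0 \<or> i = 1 \<or> i = 2" "j = 0 \<or> j = 1 \<or> j = 2" by auto
      then show ?thesis using v(1)
        by (elim disjE) (simp_all add: cw00_def cw01_def cw10_def cw11_def ccw00_def ccw01_def ccw10_def ccw11_def cyc4_def transpose_def)
    next
      case False
      then have "x \<noteq> (0,0)" "x \<noteq> (0,1)" "x \<noteq> (0,2)" "x \<noteq> (1,0)" "x \<noteq> (1,1)" "x \<noteq> (1,2)" "x \<noteq> (2,0)" "x \<noteq> (2,1)" "x \<noteq> (2,2)"
        by (auto simp: grid3_def)
      then show ?thesis by (simp add: cw00_def cw01_def cw10_def cw11_def ccw00_def ccw01_def ccw10_def ccw11_def cyc4_def transpose_def)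
    qed
  qed
  show ?thesis unfolding e by (intro G_comp G_cw00 G_cw01 G_cw10 G_cw11 G_ccw00 G_ccw01 G_ccw10 G_ccw11)
qed

lemma T12: "G TYPE('r::finite) (Transposition.transpose (1,1) (1,2))"
proof -
  have e: "Transposition.transpose (1,1) (1,2) = ccw11 \<circ> ccw10 \<circ> ccw11 \<circ> cw10 \<circ> cw00 \<circ> cw11 \<circ> ccw00"
  proof
    fix x :: "nat \<times> nat"
    show "Transposition.transpose (1,1) (1,2) x = (ccw11 \<circ> ccw10 \<circ> ccw11 \<circ> cw10 \<circ> cw00 \<circ> cw11 \<circ> ccw00) x"
    proof (cases "x \<in> grid3")
      case True
      then obtain i j where v: "x = (i,j)" "i < 3" "j < 3" unfolding grid3_def by auto
      then have "i = 0 \<or> i = 1 \<or> i = 2" "j = 0 \<or> j = 1 \<or> j = 2" by auto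
      then show ?thesis using v(1)
        by (elim disjE) (simp_all add: cw00_def cw01_def cw10_def cw11_def ccw00_def ccw01_def ccw10_def ccw11_def cyc4_def transpose_def)
    next
      case False
      then have "x \<noteq> (0,0)" "x \<noteq> (0,1)" "x \<noteq> (0,2)" "x \<noteq> (1,0)" "x \<noteq> (1,1)" "x \<noteq> (1,2)" "x \<noteq> (2,0)" "x \<noteq> (2,1)" "x \<noteq> (2,2)"
        by (auto simp: grid3_def)
      then show ?thesis by (simp add: cw00_def cw01_def cw10_def cw11_def ccw00_def ccw01_def ccw10_def ccw11_def cyc4_def transpose_def)
    qed
  qed
  show ?thesis unfolding e by (intro G_comp G_cw00 G_cw01 G_cw10 G_cw11 G_ccw00 G_ccw01 G_ccw10 G_ccw11)
qed

lemma T20: "G TYPE('r::finite) (Transposition.transpose (1,1) (2,0))"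
proof -
  have e: "Transposition.transpose (1,1) (2,0) = cw11 \<circ> ccw00 \<circ> ccw10 \<circ> ccw11 \<circ> cw00"
  proof
    fix x :: "nat \<times> nat"
    show "Transposition.transpose (1,1) (2,0) x = (cw11 \<circ> ccw00 \<circ> ccw10 \<circ> ccw11 \<circ> cw00) x"
    proof (cases "x \<in> grid3")
      case True
      then obtain i j where v: "x = (i,j)" "i < 3" "j < 3" unfolding grid3_def by auto
      then have "i = 0 \<or> i = 1 \<or> i = 2" "j = 0 \<or> j = 1 \<or> j = 2" by auto
      then show ?thesis using v(1)
        by (elim disjE) (simp_all add: cw00_def cw01_def cw10_def cw11_def ccw00_def ccw01_def ccw10_def ccw11_def cyc4_def transpose_def)
    next
      case False
      then have "x \<noteq> (0,0)" "x \<noteq> (0,1)" "x \<noteq> (0,2)" "x \<noteq> (1,0)" "x \<noteq> (1,1)" "x \<noteq> (1,2)" "x \<noteq> (2,0)" "x \<noteq> (2,1)" "x \<noteq> (2,2)"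
        by (auto simp: grid3_def)
      then show ?thesis by (simp add: cw00_def cw01_def cw10_def cw11_def ccw00_def ccw01_def ccw10_def ccw11_def cyc4_def transpose_def)
    qed
  qed
  show ?thesis unfolding e by (intro G_comp G_cw00 G_cw01 G_cw10 G_cw11 G_ccw00 G_ccw01 G_ccw10 G_ccw11)
qed

lemma T21: "G TYPE('r::finite) (Transposition.transpose (1,1) (2,1))"
proof -
  have e: "Transposition.transpose (1,1) (2,1) = cw11 \<circ> cw01 \<circ> cw11 \<circ> ccw01 \<circ> ccw00 \<circ> ccw11 \<circ> cw00"
  proof
    fix x :: "nat \<times> nat"
    show "Transposition.transpose (1,1) (2,1) x = (cw11 \<circ> cw01 \<circ> cw11 \<circ> ccw01 \<circ> ccw00 \<circ> ccw11 \<circ> cw00) x"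
    proof (cases "x \<in> grid3")
      case True
      then obtain i j where v: "x = (i,j)" "i < 3" "j < 3" unfolding grid3_def by auto
      then have "i = 0 \<or> i = 1 \<or> i = 2" "j = 0 \<or> j = 1 \<or> j = 2" by auto
      then show ?thesis using v(1)
        by (elim disjE) (simp_all add: cw00_def cw01_def cw10_def cw11_def ccw00_def ccw01_def ccw10_def ccw11_def cyc4_def transpose_def)
    next
      case False
      then have "x \<noteq> (0,0)" "x \<noteq> (0,1)" "x \<noteq> (0,2)" "x \<noteq> (1,0)" "x \<noteq> (1,1)" "x \<noteq> (1,2)" "x \<noteq> (2,0)" "x \<noteq> (2,1)" "x \<noteq> (2,2)"
        by (auto simp: grid3_def)
      then show ?thesis by (simp add: cw00_def cw01_def cw10_def cw11_def ccw00_def ccw01_def ccw10_def ccw11_def cyc4_def transpose_def)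
    qed
  qed
  show ?thesis unfolding e by (intro G_comp G_cw00 G_cw01 G_cw10 G_cw11 G_ccw00 G_ccw01 G_ccw10 G_ccw11)
qed

lemma T22: "G TYPE('r::finite) (Transposition.transpose (1,1) (2,2))"
proof -
  have e: "Transposition.transpose (1,1) (2,2) = ccw10 \<circ> cw01 \<circ> cw11 \<circ> cw10 \<circ> ccw01"
  proof
    fix x :: "nat \<times> nat"
    show "Transposition.transpose (1,1) (2,2) x = (ccw10 \<circ> cw01 \<circ> cw11 \<circ> cw10 \<circ> ccw01) x"
    proof (cases "x \<in> grid3")
      case True
      then obtain i j where v: "x = (i,j)" "i < 3" "j < 3" unfolding grid3_def by auto
      then have "i = 0 \<or> i = 1 \<or> i = 2" "j = 0 \<or> j = 1 \<or> j = 2" by auto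
      then show ?thesis using v(1)
        by (elim disjE) (simp_all add: cw00_def cw01_def cw10_def cw11_def ccw00_def ccw01_def ccw10_def ccw11_def cyc4_def transpose_def)
    next
      case False
      then have "x \<noteq> (0,0)" "x \<noteq> (0,1)" "x \<noteq> (0,2)" "x \<noteq> (1,0)" "x \<noteq> (1,1)" "x \<noteq> (1,2)" "x \<noteq> (2,0)" "x \<noteq> (2,1)" "x \<noteq> (2,2)"
        by (auto simp: grid3_def)
      then show ?thesis by (simp add: cw00_def cw01_def cw10_def cw11_def ccw00_def ccw01_def ccw10_def ccw11_def cyc4_def transpose_def)
    qed
  qed
  show ?thesis unfolding e by (intro G_comp G_cw00 G_cw01 G_cw10 G_cw11 G_ccw00 G_ccw01 G_ccw10 G_ccw11)
qed

lemma G_center: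
  assumes "v \<in> grid3"
  shows "G TYPE('r::finite) (Transposition.transpose (1,1) v)"
proof -
  have "v \<in> {(0,0),(0,1),(0,2),(1,0),(1,1),(1,2),(2,0),(2,1),(2,2)}"
    using assms unfolding grid3_def by (auto simp: less_Suc_eq numeral_3_eq_3)
  then show ?thesis
    by (elim insertE emptyE) (simp_all only: T00 T01 T02 T10 T12 T20 T21 T22 G_id transpose_same)
qed

lemma G_transpose:
  assumes "a \<in> grid3" "b \<in> grid3"
  shows "G TYPE('r::finite) (Transposition.transpose a b)"
proof -
  consider "a = b" | "a = (1,1)" | "b = (1,1)" | "a \<noteq> b" "a \<noteq> (1,1)" "b \<noteq> (1,1)" by blast
  then show ?thesis
  proof cases
    case 1 then show ?thesis by (simp add: G_id)
  next
    case 2 then show ?thesis using G_center assms by blast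
  next
    case 3 then show ?thesis using G_center assms by (metis transpose_commute)
  next
    case 4
    have e: "Transposition.transpose a b = Transposition.transpose (1,1) a \<circ> Transposition.transpose (1,1) b \<circ> Transposition.transpose (1,1) a"
      using 4 by (auto simp: fun_eq_iff transpose_def)
    show ?thesis unfolding e using assms by (intro G_comp G_center)
  qed
qed

lemma G_all:
  assumes "p permutes grid3"
  shows "G TYPE('r::finite) p"
proof -
  have "finite grid3" unfolding grid3_def by simp
  from assms this show ?thesis
  proof (induction rule: permutes_induct)
    case id then show ?case by (rule G_id)
  next
    case (swap a b p) then show ?case by (intro G_comp G_transpose)
  qed
qed

theorem proposition3:
  fixes s t :: "'r::finite \<Rightarrow> nat \<times> nat"
  assumes "card (UNIV :: 'r set) = 9"
    and "is_state s" and "is_state t"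
  shows "legal_move\<^sup>*\<^sup>* s t"
proof -
  define p where "p = (\<lambda>x. if x \<in> grid3 then t (inv_into UNIV s x) else x)"
  have bs: "bij_betw s UNIV grid3" and bt: "bij_betw t UNIV grid3"
    using assms unfolding is_state_def by auto
  have bi: "bij_betw (inv_into UNIV s) grid3 UNIV" using bs by (rule bij_betw_inv_into)
  have "bij_betw (t \<circ> inv_into UNIV s) grid3 grid3" using bi bt by (rule bij_betw_trans)
  then have "bij_betw p grid3 grid3"
    unfolding p_def by (rule bij_betw_cong[THEN iffD1, rotated]) auto
  then have pp: "p permutes grid3" by (rule bij_imp_permutes) (simp add: p_def)
  have inj: "inj s" using bs unfolding bij_betw_def by auto
  have "p \<circ> s = t"
  proof
    fix r
    have "s r \<in> grid3" using bs bij_betwE by blast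
    then show "(p \<circ> s) r = t r" by (simp add: p_def inv_into_f_f[OF inj])
  qed
  moreover have "G TYPE('r) p" by (rule G_all[OF pp])
  ultimately show ?thesis using assms(2) unfolding G_def by metis
qed

end
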